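(* Let $q\in\mathbb H$. The function $s\mapsto\mathcal D S_L^{-1}(s,q)$, defined for $s\in\mathbb H\setminus[q]$, is intrinsic slice hyperholomorphic in $s$.
   Context: $\mathbb H$ denotes the quaternions; $\mathbb S$ is the sphere of unit purely imaginary quaternions; for $q=q_0+\underline q$, $[q]=\{q_0+J|\underline q|:J\in\mathbb S\}$. $S_L^{-1}(s,q):=(s-\bar q)(s^2-2\Re(q)s+|q|^2)^{-1}$ and $\mathcal D=\partial_{q_0}+\sum_{i=1}^3e_i\partial_{q_i}$ acts in the variable $q$. A function $h$ on an axially symmetric open set (with $u+Iv$ containing all $u+Jv$, $J\in\mathbb S$) is intrinsic slice hyperholomorphic if $h(u+Jv)=\alpha(u,v)+J\beta(u,v)$ for all $J\in\mathbb S$ with $\alpha,\beta$ real-valued differentiable, $\alpha(u,-v)=\alpha(u,v)$, $\beta(u,-v)=-\beta(u,v)$, $\partial_u\alpha=\partial_v\beta$, $\partial_v\alpha=-\partial_u\beta$. *)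

theory Defs
  imports "HOL-Analysis.Analysis"
begin

text \<open>Quaternions are modelled as real^4: q = q$1 + q$2 e1 + q$3 e2 + q$4 e3.
  The Euclidean norm of real^4 is the quaternion modulus.\<close>

type_synonym quat = "real^4"

definition qmul :: "quat \<Rightarrow> quat \<Rightarrow> quat" where
  "qmul p q = vector
     [p$1*q$1 - p$2*q$2 - p$3*q$3 - p$4*q$4,
      p$1*q$2 + p$2*q$1 + p$3*q$4 - p$4*q$3,
      p$1*q$3 - p$2*q$4 + p$3*q$1 + p$4*q$2,
      p$1*q$4 + p$2*q$3 - p$3*q$2 + p$4*q$1]"

definition qreal :: "real \<Rightarrow> quat" where
  "qreal r = vector [r, 0, 0, 0]"

definition qcnj :: "quat \<Rightarrow> quat" where
  "qcnj q = vector [q$1, - q$2, - q$3, - q$4]"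

definition qinv :: "quat \<Rightarrow> quat" where
  "qinv q = (1 / (norm q)\<^sup>2) *\<^sub>R qcnj q"

definition qRe :: "quat \<Rightarrow> real" where
  "qRe q = q$1"

definition qIm :: "quat \<Rightarrow> quat" where
  "qIm q = q - qreal (q$1)"

definition qsphere :: "quat set" where
  "qsphere = {J. J$1 = 0 \<and> norm J = 1}"

definition qclass :: "quat \<Rightarrow> quat set" where
  "qclass q = {qreal (qRe q) + norm (qIm q) *\<^sub>R J | J. J \<in> qsphere}"

definition SLinv :: "quat \<Rightarrow> quat \<Rightarrow> quat" where
  "SLinv s q = qmul (s - qcnj q)
      (qinv (qmul s s - (2 * qRe q) *\<^sub>R s + qreal ((norm q)\<^sup>2)))"

text \<open>Partial derivative of f with respect to the real coordinate q_i
  (index i::4; 1 = real part, 2,3,4 = e1,e2,e3 coordinates).\<close>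
definition qpartial :: "(quat \<Rightarrow> quat) \<Rightarrow> 4 \<Rightarrow> quat \<Rightarrow> quat" where
  "qpartial f i q = vector_derivative (\<lambda>t. f (q + t *\<^sub>R axis i 1)) (at 0)"

definition fueterD :: "(quat \<Rightarrow> quat) \<Rightarrow> quat \<Rightarrow> quat" where
  "fueterD f q = qpartial f 1 q
      + qmul (axis 2 1) (qpartial f 2 q)
      + qmul (axis 3 1) (qpartial f 3 q)
      + qmul (axis 4 1) (qpartial f 4 q)"

definition axially_symmetric :: "quat set \<Rightarrow> bool" where
  "axially_symmetric U \<longleftrightarrow>
     (\<forall>u v I J. I \<in> qsphere \<longrightarrow> J \<in> qsphere \<longrightarrow>
        qreal u + v *\<^sub>R I \<in> U \<longrightarrow> qreal u + v *\<^sub>R J \<in> U)"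

text \<open>Intrinsic slice hyperholomorphic functions on an axially symmetric open set U.
  The planar domain of alpha, beta is {(u,v). u + I v \<in> U} (independent of I \<in> S).\<close>
definition intrinsic_slice_hyperholomorphic :: "quat set \<Rightarrow> (quat \<Rightarrow> quat) \<Rightarrow> bool" where
  "intrinsic_slice_hyperholomorphic U h \<longleftrightarrow>
     open U \<and> axially_symmetric U \<and>
     (\<exists>\<alpha> \<beta> :: real \<times> real \<Rightarrow> real.
        (\<forall>J \<in> qsphere. \<forall>u v. qreal u + v *\<^sub>R J \<in> U \<longrightarrow>
            h (qreal u + v *\<^sub>R J) = qreal (\<alpha> (u, v)) + \<beta> (u, v) *\<^sub>R J) \<and>
        (\<forall>u v. (\<exists>J \<in> qsphere. qreal u + v *\<^sub>R J \<in> U) \<longrightarrow>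
            \<alpha> differentiable (at (u, v)) \<and> \<beta> differentiable (at (u, v)) \<and>
            \<alpha> (u, - v) = \<alpha> (u, v) \<and> \<beta> (u, - v) = - \<beta> (u, v) \<and>
            deriv (\<lambda>x. \<alpha> (x, v)) u = deriv (\<lambda>y. \<beta> (u, y)) v \<and>
            deriv (\<lambda>y. \<alpha> (u, y)) v = - deriv (\<lambda>x. \<beta> (x, v)) u))"

end

theory Submission
  imports Defs
begin
lemma v4 [simp]: "(vector [a,b,c,d] :: real^4)$1 = a" "(vector [a,b,c,d] :: real^4)$2 = b"
  "(vector [a,b,c,d] :: real^4)$3 = c" "(vector [a,b,c,d] :: real^4)$4 = d"
  unfolding vector_def by simp_all
lemma nsq: "(norm (p::real^4))^2 = p$1^2+p$2^2+p$3^2+p$4^2"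
  by (simp add: norm_vec_def L2_set_def sum_4)
lemma ax [simp]: "(axis (i::4) (1::real)) $ j = (if i = j then 1 else 0)"
  by (simp add: axis_def)

definition sg :: "quat \<Rightarrow> real" where "sg s = (s$2)^2+(s$3)^2+(s$4)^2"
definition AQ :: "quat \<Rightarrow> real \<Rightarrow> real \<Rightarrow> real" where "AQ s r m = (s$1)^2 - sg s - 2*r*(s$1) + m"
definition BQ :: "quat \<Rightarrow> real \<Rightarrow> real" where "BQ s r = 2*(s$1 - r)"
definition DQ :: "quat \<Rightarrow> real \<Rightarrow> real \<Rightarrow> real" where "DQ s r m = (AQ s r m)^2 + (BQ s r)^2 * sg s"
definition qone :: quat where "qone = vector [1,0,0,0]"
definition vv :: "quat \<Rightarrow> quat" where "vv s = vector [0, s$2, s$3, s$4]"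

lemma N_repr: "qmul s s - (2*r) *\<^sub>R s + qreal m = AQ s r m *\<^sub>R qone + BQ s r *\<^sub>R vv s"
  by (simp add: vec_eq_iff forall_4 qmul_def qreal_def AQ_def BQ_def sg_def qone_def vv_def power2_eq_square; algebra)

lemma inv_repr: "qinv (qmul s s - (2*r) *\<^sub>R s + qreal m) =
   (AQ s r m / DQ s r m) *\<^sub>R qone + (- BQ s r / DQ s r m) *\<^sub>R vv s"
proof -
  have n: "(norm (AQ s r m *\<^sub>R qone + BQ s r *\<^sub>R vv s))^2 = DQ s r m"
    unfolding nsq by (simp add: DQ_def qone_def vv_def sg_def algebra_simps power2_eq_square)
  show ?thesis unfolding N_repr qinv_def n
    by (simp add: vec_eq_iff forall_4 qcnj_def qone_def vv_def divide_simps)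
qed

lemma SL_repr: "SLinv s p = qmul (s - qcnj p)
   ((AQ s (p$1) ((norm p)^2) / DQ s (p$1) ((norm p)^2)) *\<^sub>R qone + (- BQ s (p$1) / DQ s (p$1) ((norm p)^2)) *\<^sub>R vv s)"
  unfolding SLinv_def qRe_def inv_repr ..

lemma line1: fixes q :: quat and i :: 4 shows "(q + t *\<^sub>R axis i 1) $ 1 = q$1 + t * (if i = 1 then 1 else 0)"
  by auto
lemma line2: fixes q :: quat and i :: 4 shows "(norm (q + t *\<^sub>R axis i (1::real)))^2 = (norm q)^2 + 2*t*(q$i) + t^2"
  unfolding nsq using exhaust_4[of i] by (auto simp: algebra_simps power2_eq_square)

lemma dgen:
  fixes A0 B0 al be w :: real
  assumes D: "A0^2 + B0^2*w \<noteq> 0"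
  shows "((\<lambda>t. (A0 + al*t + t^2) / ((A0 + al*t + t^2)^2 + (B0 + be*t)^2*w)) has_real_derivative
      (al*(A0^2 + B0^2*w) - A0*(2*A0*al + 2*B0*be*w))/(A0^2 + B0^2*w)^2) (at 0)"
    and "((\<lambda>t. - (B0 + be*t) / ((A0 + al*t + t^2)^2 + (B0 + be*t)^2*w)) has_real_derivative
      - (be*(A0^2 + B0^2*w) - B0*(2*A0*al + 2*B0*be*w))/(A0^2 + B0^2*w)^2) (at 0)"
  using D by (auto intro!: derivative_eq_intros simp: field_simps power2_eq_square)

lemma bilin: "qmul (X - t *\<^sub>R c) (a *\<^sub>R qone + b *\<^sub>R v) =
   a *\<^sub>R qmul X qone + b *\<^sub>R qmul X v - (t*a) *\<^sub>R qmul c qone - (t*b) *\<^sub>R qmul c v"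
  by (simp add: vec_eq_iff forall_4 qmul_def qone_def algebra_simps)

lemma dlin:
  fixes K1 K2 K3 K4 :: quat
  assumes "(fa has_real_derivative da) (at 0)" "(fb has_real_derivative db) (at 0)"
  shows "((\<lambda>t. fa t *\<^sub>R K1 + fb t *\<^sub>R K2 - (t * fa t) *\<^sub>R K3 - (t * fb t) *\<^sub>R K4) has_vector_derivative
     (da *\<^sub>R K1 + db *\<^sub>R K2 - fa 0 *\<^sub>R K3 - fb 0 *\<^sub>R K4)) (at 0)"
  using assms by (auto intro!: derivative_eq_intros)

definition dAf :: "quat \<Rightarrow> quat \<Rightarrow> 4 \<Rightarrow> real" where
  "dAf s q i = (let A0 = AQ s (q$1) ((norm q)^2); B0 = BQ s (q$1); w = sg s;
      al = 2*(q$i) - 2*(if i = 1 then 1 else 0)*(s$1); be = -2*(if i = 1 then 1 else 0) in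
      (al*(A0^2 + B0^2*w) - A0*(2*A0*al + 2*B0*be*w))/(A0^2 + B0^2*w)^2)"
definition dBf :: "quat \<Rightarrow> quat \<Rightarrow> 4 \<Rightarrow> real" where
  "dBf s q i = (let A0 = AQ s (q$1) ((norm q)^2); B0 = BQ s (q$1); w = sg s;
      al = 2*(q$i) - 2*(if i = 1 then 1 else 0)*(s$1); be = -2*(if i = 1 then 1 else 0) in
      - (be*(A0^2 + B0^2*w) - B0*(2*A0*al + 2*B0*be*w))/(A0^2 + B0^2*w)^2)"

lemma qpart:
  fixes s q :: quat and i :: 4
  assumes D: "DQ s (q$1) ((norm q)^2) \<noteq> 0"
  shows "qpartial (\<lambda>p. SLinv s p) i q =
     dAf s q i *\<^sub>R qmul (s - qcnj q) qone + dBf s q i *\<^sub>R qmul (s - qcnj q) (vv s)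
     - (AQ s (q$1) ((norm q)^2) / DQ s (q$1) ((norm q)^2)) *\<^sub>R qmul (qcnj (axis i 1)) qone
     - (- BQ s (q$1) / DQ s (q$1) ((norm q)^2)) *\<^sub>R qmul (qcnj (axis i 1)) (vv s)"
proof -
  define A0 where "A0 = AQ s (q$1) ((norm q)^2)"
  define B0 where "B0 = BQ s (q$1)"
  define w where "w = sg s"
  define al where "al = 2*(q$i) - 2*(if i = 1 then 1 else (0::real))*(s$1)"
  define be where "be = -2*(if i = 1 then 1 else (0::real))"
  have DD: "A0^2 + B0^2*w \<noteq> 0" using D unfolding A0_def B0_def w_def DQ_def .
  have eA: "AQ s ((q + t *\<^sub>R axis i 1) $ 1) ((norm (q + t *\<^sub>R axis i 1))^2) = A0 + al*t + t^2" for t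
    unfolding line1 line2 A0_def al_def AQ_def by (simp add: algebra_simps)
  have eB: "BQ s ((q + t *\<^sub>R axis i 1) $ 1) = B0 + be*t" for t
    unfolding line1 B0_def be_def BQ_def by (simp add: algebra_simps)
  have eX: "s - qcnj (q + t *\<^sub>R axis i 1) = (s - qcnj q) - t *\<^sub>R qcnj (axis i 1)" for t
    by (simp add: vec_eq_iff forall_4 qcnj_def)
  define fa where "fa = (\<lambda>t. (A0 + al*t + t^2) / ((A0 + al*t + t^2)^2 + (B0 + be*t)^2*w))"
  define fb where "fb = (\<lambda>t. - (B0 + be*t) / ((A0 + al*t + t^2)^2 + (B0 + be*t)^2*w))"
  have feq: "(\<lambda>t. SLinv s (q + t *\<^sub>R axis i 1)) = (\<lambda>t. fa t *\<^sub>R qmul (s - qcnj q) qone + fb t *\<^sub>R qmul (s - qcnj q) (vv s)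
      - (t * fa t) *\<^sub>R qmul (qcnj (axis i 1)) qone - (t * fb t) *\<^sub>R qmul (qcnj (axis i 1)) (vv s))"
    unfolding SL_repr eA eB eX DQ_def bilin fa_def fb_def w_def[symmetric] ..
  have "((\<lambda>t. SLinv s (q + t *\<^sub>R axis i 1)) has_vector_derivative
     dAf s q i *\<^sub>R qmul (s - qcnj q) qone + dBf s q i *\<^sub>R qmul (s - qcnj q) (vv s)
     - fa 0 *\<^sub>R qmul (qcnj (axis i 1)) qone
     - fb 0 *\<^sub>R qmul (qcnj (axis i 1)) (vv s)) (at 0)"
    unfolding feq
    apply (rule dlin)
    unfolding fa_def fb_def dAf_def dBf_def Let_def A0_def[symmetric] B0_def[symmetric] w_def[symmetric]
      al_def[symmetric] be_def[symmetric]
    using dgen[OF DD] by auto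
  moreover have "fa 0 = AQ s (q$1) ((norm q)^2) / DQ s (q$1) ((norm q)^2)"
    "fb 0 = - BQ s (q$1) / DQ s (q$1) ((norm q)^2)"
    unfolding fa_def fb_def A0_def B0_def w_def DQ_def by simp_all
  ultimately show ?thesis unfolding qpartial_def by (metis vector_derivative_at)
qed


definition Ef :: "quat \<Rightarrow> quat \<Rightarrow> real \<Rightarrow> real \<Rightarrow> 4 \<Rightarrow> quat" where
  "Ef s q a0 b0 i = (let w = sg s; d = (if i = 1 then 1 else 0);
     ar = 2*((s$1)*(a0^2 - b0^2*w) - 2*a0*b0*w); br = 2*((a0^2 - b0^2*w) + 2*a0*b0*(s$1));
     am = - (a0^2 - b0^2*w); bm = -2*a0*b0 in
     (d*ar + 2*(q$i)*am) *\<^sub>R qmul (s - qcnj q) qone + (d*br + 2*(q$i)*bm) *\<^sub>R qmul (s - qcnj q) (vv s)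
     - a0 *\<^sub>R qmul (qcnj (axis i 1)) qone - b0 *\<^sub>R qmul (qcnj (axis i 1)) (vv s))"

lemma step1:
  fixes s q :: quat and a0 b0 :: real
  defines "R \<equiv> a0 *\<^sub>R qone + b0 *\<^sub>R vv s"
  defines "Qm \<equiv> AQ s (q$1) ((norm q)^2) *\<^sub>R qone + BQ s (q$1) *\<^sub>R vv s"
  shows "Ef s q a0 b0 1 + qmul (axis 2 1) (Ef s q a0 b0 2) + qmul (axis 3 1) (Ef s q a0 b0 3)
     + qmul (axis 4 1) (Ef s q a0 b0 4) = 2 *\<^sub>R qmul Qm (qmul R R) - 4 *\<^sub>R R"
  unfolding R_def Qm_def Ef_def Let_def AQ_def BQ_def sg_def nsq
  apply (simp add: vec_eq_iff forall_4 qmul_def qcnj_def qone_def vv_def)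
  apply (safe; algebra)
  done


lemma qmul_assoc: "qmul (qmul a b) c = qmul a (qmul b c)"
  by (simp add: vec_eq_iff forall_4 qmul_def; algebra)
lemma qmul_one: "qmul qone a = a"
  by (simp add: vec_eq_iff forall_4 qmul_def qone_def)

lemma QRgen: "qmul (A *\<^sub>R qone + B *\<^sub>R vv s) (a *\<^sub>R qone + b *\<^sub>R vv s)
   = (A*a - B*b*(sg s)) *\<^sub>R qone + (A*b + B*a) *\<^sub>R vv s"
  by (simp add: vec_eq_iff forall_4 qmul_def qone_def vv_def sg_def; algebra)

lemma QR:
  assumes D: "DQ s r m \<noteq> 0"
  shows "qmul (AQ s r m *\<^sub>R qone + BQ s r *\<^sub>R vv s)
     ((AQ s r m / DQ s r m) *\<^sub>R qone + (- BQ s r / DQ s r m) *\<^sub>R vv s) = qone"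
proof -
  define A where "A = AQ s r m"
  define B where "B = BQ s r"
  define w where "w = sg s"
  have D': "A^2 + B^2*w \<noteq> 0" using D unfolding DQ_def A_def B_def w_def .
  define d where "d = A^2 + B^2*w"
  have d0: "d \<noteq> 0" using D' d_def by simp
  have e1: "A*(A/(A^2 + B^2*w)) - B*(-B/(A^2 + B^2*w))*w = 1" unfolding d_def[symmetric]
    using d0 apply (simp add: field_simps) using d_def by algebra
  have e2: "A*(-B/(A^2 + B^2*w)) + B*(A/(A^2 + B^2*w)) = 0" unfolding d_def[symmetric]
    using d0 by (simp add: field_simps)
  show ?thesis unfolding QRgen DQ_def A_def[symmetric] B_def[symmetric] w_def[symmetric] e1 e2 by simp
qed

lemma arithA:
  fixes A B w dd qi u1 :: real
  assumes D': "A^2 + B^2*w \<noteq> 0"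
  shows "((2*qi - 2*dd*u1)*(A^2 + B^2*w) - A*(2*A*(2*qi - 2*dd*u1) + 2*B*(-2*dd)*w))/(A^2 + B^2*w)^2
    = dd*(2*(u1*((A/(A^2 + B^2*w))^2 - (-B/(A^2 + B^2*w))^2*w) - 2*(A/(A^2 + B^2*w))*(-B/(A^2 + B^2*w))*w))
      + 2*qi*(- ((A/(A^2 + B^2*w))^2 - (-B/(A^2 + B^2*w))^2*w))"
proof -
  define d where "d = A^2 + B^2*w"
  have d0: "d \<noteq> 0" using D' d_def by simp
  show ?thesis unfolding d_def[symmetric] using d0 apply (simp add: field_simps)
    using d_def by algebra
qed

lemma arithB:
  fixes A B w dd qi u1 :: real
  assumes D': "A^2 + B^2*w \<noteq> 0"
  shows "- ((-2*dd)*(A^2 + B^2*w) - B*(2*A*(2*qi - 2*dd*u1) + 2*B*(-2*dd)*w))/(A^2 + B^2*w)^2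
    = dd*(2*(((A/(A^2 + B^2*w))^2 - (-B/(A^2 + B^2*w))^2*w) + 2*(A/(A^2 + B^2*w))*(-B/(A^2 + B^2*w))*u1))
      + 2*qi*(-2*(A/(A^2 + B^2*w))*(-B/(A^2 + B^2*w)))"
proof -
  define d where "d = A^2 + B^2*w"
  have d0: "d \<noteq> 0" using D' d_def by simp
  show ?thesis unfolding d_def[symmetric] using d0 apply (simp add: field_simps)
    using d_def by algebra
qed

lemma dAB:
  fixes s q :: quat and i :: 4
  assumes D: "DQ s (q$1) ((norm q)^2) \<noteq> 0"
  shows "qpartial (\<lambda>p. SLinv s p) i q = Ef s q (AQ s (q$1) ((norm q)^2) / DQ s (q$1) ((norm q)^2))
     (- BQ s (q$1) / DQ s (q$1) ((norm q)^2)) i"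
proof -
  define A0 where "A0 = AQ s (q$1) ((norm q)^2)"
  define B0 where "B0 = BQ s (q$1)"
  define w where "w = sg s"
  have D': "A0^2 + B0^2*w \<noteq> 0" using D unfolding DQ_def A0_def B0_def w_def .
  define d where "d = A0^2 + B0^2*w"
  have d0: "d \<noteq> 0" using D' d_def by simp
  have 1: "dAf s q i = (let dd = (if i = 1 then 1 else 0); a0 = A0/(A0^2 + B0^2*w); b0 = -B0/(A0^2 + B0^2*w);
     ar = 2*((s$1)*(a0^2 - b0^2*w) - 2*a0*b0*w); am = - (a0^2 - b0^2*w) in dd*ar + 2*(q$i)*am)"
    unfolding dAf_def Let_def A0_def[symmetric] B0_def[symmetric] w_def[symmetric]
    using arithA[OF D'] by simp
  have 2: "dBf s q i = (let dd = (if i = 1 then 1 else 0); a0 = A0/(A0^2 + B0^2*w); b0 = -B0/(A0^2 + B0^2*w);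
     br = 2*((a0^2 - b0^2*w) + 2*a0*b0*(s$1)); bm = -2*a0*b0 in dd*br + 2*(q$i)*bm)"
    unfolding dBf_def Let_def A0_def[symmetric] B0_def[symmetric] w_def[symmetric]
    using arithB[OF D'] by simp
  show ?thesis unfolding qpart[OF D] Ef_def 1 2 unfolding Let_def A0_def B0_def w_def DQ_def d_def by simp
qed

lemma fD:
  fixes s q :: quat
  assumes D: "DQ s (q$1) ((norm q)^2) \<noteq> 0"
  shows "fueterD (\<lambda>p. SLinv s p) q = (-2) *\<^sub>R ((AQ s (q$1) ((norm q)^2) / DQ s (q$1) ((norm q)^2)) *\<^sub>R qone
      + (- BQ s (q$1) / DQ s (q$1) ((norm q)^2)) *\<^sub>R vv s)"
  unfolding fueterD_def dAB[OF D] step1 qmul_assoc[symmetric] QR[OF D] qmul_one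
  by (simp add: vec_eq_iff forall_4 qone_def vv_def)


definition Fq :: "quat \<Rightarrow> complex \<Rightarrow> complex" where
  "Fq q z = -2 / ((z - of_real (q$1))^2 + of_real (sg q))"
definition Az :: "quat \<Rightarrow> real \<Rightarrow> real \<Rightarrow> real" where
  "Az q u v = u^2 - v^2 - 2*(q$1)*u + (q$1)^2 + sg q"
definition Dz :: "quat \<Rightarrow> real \<Rightarrow> real \<Rightarrow> real" where
  "Dz q u v = (Az q u v)^2 + (2*(u - (q$1)))^2 * v^2"

lemma w_eq: "(of_real u + \<i> * of_real v - of_real (q$1))^2 + of_real (sg q) = Complex (Az q u v) (2*(u - (q$1))* v)"
  by (simp add: complex_eq_iff power2_eq_square Az_def algebra_simps)

lemma Re_F: "Re (Fq q (of_real u + \<i> * of_real v)) = -2 * Az q u v / Dz q u v"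
  unfolding Fq_def w_eq by (simp add: Re_divide Dz_def power_mult_distrib)
lemma Im_F: "Im (Fq q (of_real u + \<i> * of_real v)) = 2 * (2*(u - (q$1))) * v / Dz q u v"
  unfolding Fq_def w_eq by (simp add: Im_divide Dz_def power_mult_distrib)
lemma w_nz: "Dz q u v \<noteq> 0 \<Longrightarrow> (of_real u + \<i> * of_real v - of_real (q$1))^2 + of_real (sg q) \<noteq> 0"
  unfolding w_eq by (auto simp: Dz_def complex_eq_iff power_mult_distrib)

lemma qreal_c [simp]: "qreal r $ 1 = r" "qreal r $ 2 = 0" "qreal r $ 3 = 0" "qreal r $ 4 = 0"
  by (simp_all add: qreal_def)

lemma sphere_sg: "J \<in> qsphere \<Longrightarrow> J$1 = 0 \<and> sg J = 1"
  unfolding qsphere_def using nsq[of J] by (auto simp: sg_def)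

lemma pt:
  assumes J: "J \<in> qsphere"
  shows "(qreal u + v *\<^sub>R J)$1 = u" "sg (qreal u + v *\<^sub>R J) = v^2"
    "DQ (qreal u + v *\<^sub>R J) (q$1) ((norm q)^2) = Dz q u v"
    "AQ (qreal u + v *\<^sub>R J) (q$1) ((norm q)^2) = Az q u v"
    "BQ (qreal u + v *\<^sub>R J) (q$1) = 2*(u - (q$1))"
    "vv (qreal u + v *\<^sub>R J) = v *\<^sub>R J"
proof -
  have J1: "J$1 = 0" and Js: "(J$2)^2 + (J$3)^2 + (J$4)^2 = 1" using sphere_sg[OF J] by (auto simp: sg_def)
  show 1: "(qreal u + v *\<^sub>R J)$1 = u" using J1 by (simp add: qreal_def)
  have "sg (qreal u + v *\<^sub>R J) = v^2 * ((J$2)^2 + (J$3)^2 + (J$4)^2)"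
    by (simp add: sg_def qreal_def power_mult_distrib algebra_simps)
  also have "\<dots> = v^2" by (simp only: Js mult_1_right)
  finally show 2: "sg (qreal u + v *\<^sub>R J) = v^2" .
  show 3: "AQ (qreal u + v *\<^sub>R J) (q$1) ((norm q)^2) = Az q u v"
    unfolding AQ_def Az_def 1 2 nsq by (simp add: sg_def algebra_simps)
  show "BQ (qreal u + v *\<^sub>R J) (q$1) = 2*(u - (q$1))" unfolding BQ_def 1 ..
  then show "DQ (qreal u + v *\<^sub>R J) (q$1) ((norm q)^2) = Dz q u v"
    unfolding DQ_def Dz_def 3 2 by simp
  show "vv (qreal u + v *\<^sub>R J) = v *\<^sub>R J"
    using J1 by (simp add: vec_eq_iff forall_4 vv_def qreal_def)
qed

lemma normIm: "norm (qIm q) = sqrt (sg q)"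
proof -
  have "(norm (qIm q))^2 = sg q" unfolding nsq by (simp add: qIm_def qreal_def sg_def)
  then show ?thesis by (metis norm_ge_zero real_sqrt_unique)
qed

lemma class_iff: "s \<in> qclass q \<longleftrightarrow> DQ s (q$1) ((norm q)^2) = 0"
proof
  assume "s \<in> qclass q"
  then obtain J where J: "J \<in> qsphere" and s: "s = qreal (q$1) + norm (qIm q) *\<^sub>R J"
    unfolding qclass_def qRe_def by auto
  have "DQ s (q$1) ((norm q)^2) = Dz q (q$1) (norm (qIm q))" unfolding s by (rule pt(3)[OF J])
  also have "\<dots> = 0" unfolding Dz_def Az_def normIm by (simp add: sg_def power2_eq_square)
  finally show "DQ s (q$1) ((norm q)^2) = 0" .
next
  assume D: "DQ s (q$1) ((norm q)^2) = 0"
  have sgn: "sg s \<ge> 0" "sg q \<ge> 0" by (simp_all add: sg_def)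
  have A: "AQ s (q$1) ((norm q)^2) = 0" and BS: "BQ s (q$1) = 0 \<or> sg s = 0"
    using D sgn unfolding DQ_def by (auto simp: add_nonneg_eq_0_iff)
  have Aexp: "AQ s (q$1) ((norm q)^2) = (s$1 - q$1)^2 - sg s + sg q"
    unfolding AQ_def nsq sg_def by (simp add: algebra_simps power2_eq_square)
  have s1: "s$1 = q$1" and sgq: "sg s = sg q"
  proof -
    have "s$1 = q$1 \<and> sg s = sg q"
    proof (cases "sg s = 0")
      case True
      then have "(s$1 - q$1)^2 + sg q = 0" using A Aexp by simp
      then show ?thesis using True sgn by (simp add: add_nonneg_eq_0_iff)
    next
      case False
      then have "s$1 = q$1" using BS unfolding BQ_def by simp
      then show ?thesis using A Aexp by simp
    qed
    then show "s$1 = q$1" "sg s = sg q" by auto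
  qed
  show "s \<in> qclass q"
  proof (cases "sg s = 0")
    case True
    have z: "s$2 = 0" "s$3 = 0" "s$4 = 0" using True unfolding sg_def
      by (simp_all add: add_nonneg_eq_0_iff)
    have J: "axis 2 1 \<in> qsphere" by (simp add: qsphere_def)
    have "s = qreal (qRe q) + norm (qIm q) *\<^sub>R axis 2 1"
      using z s1 True sgq by (simp add: vec_eq_iff forall_4 qreal_def qRe_def normIm)
    then show ?thesis unfolding qclass_def using J by blast
  next
    case False
    then have pos: "sg s > 0" using sgn by simp
    define J where "J = (1 / sqrt (sg s)) *\<^sub>R vv s"
    have "(norm J)^2 = 1" unfolding nsq J_def using pos
      by (simp add: vv_def power_mult_distrib sg_def[symmetric] power_divide)
      (simp add: add_divide_distrib[symmetric] sg_def)
    then have "norm J = 1" using norm_ge_zero[of J] by (auto simp: power2_eq_1_iff)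
    moreover have "J$1 = 0" by (simp add: J_def vv_def)
    ultimately have J: "J \<in> qsphere" unfolding qsphere_def by simp
    have "s = qreal (qRe q) + norm (qIm q) *\<^sub>R J"
      using s1 sgq pos by (simp add: vec_eq_iff forall_4 qreal_def qRe_def normIm J_def vv_def)
    then show ?thesis unfolding qclass_def using J by blast
  qed
qed


lemma partials:
  assumes F': "(Fq q has_field_derivative F') (at (of_real u + \<i> * of_real v))"
  shows "deriv (\<lambda>x. Re (Fq q (of_real x + \<i> * of_real v))) u = Re F'"
    "deriv (\<lambda>x. Im (Fq q (of_real x + \<i> * of_real v))) u = Im F'"
    "deriv (\<lambda>y. Re (Fq q (of_real u + \<i> * of_real y))) v = - Im F'"
    "deriv (\<lambda>y. Im (Fq q (of_real u + \<i> * of_real y))) v = Re F'"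
proof -
  have "((\<lambda>w. w + \<i> * of_real v) has_field_derivative 1) (at (of_real u))"
    by (auto intro!: derivative_eq_intros)
  from DERIV_chain'[OF this] F'
  have "((\<lambda>w. Fq q (w + \<i> * of_real v)) has_field_derivative F' * 1) (at (of_real u))" by simp
  then have hx: "((\<lambda>x. Fq q (of_real x + \<i> * of_real v)) has_vector_derivative F') (at u)"
    using has_vector_derivative_real_field[of "\<lambda>w. Fq q (w + \<i> * of_real v)" F' u UNIV] by simp
  show "deriv (\<lambda>x. Re (Fq q (of_real x + \<i> * of_real v))) u = Re F'"
    by (rule DERIV_imp_deriv) (rule has_field_derivative_Re[OF hx])
  show "deriv (\<lambda>x. Im (Fq q (of_real x + \<i> * of_real v))) u = Im F'"
    by (rule DERIV_imp_deriv) (rule has_field_derivative_Im[OF hx])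
  have "((\<lambda>w. of_real u + \<i> * w) has_field_derivative \<i>) (at (of_real v))"
    by (auto intro!: derivative_eq_intros)
  from DERIV_chain'[OF this] F'
  have "((\<lambda>w. Fq q (of_real u + \<i> * w)) has_field_derivative F' * \<i>) (at (of_real v))" by simp
  then have hy: "((\<lambda>y. Fq q (of_real u + \<i> * of_real y)) has_vector_derivative F' * \<i>) (at v)"
    using has_vector_derivative_real_field[of "\<lambda>w. Fq q (of_real u + \<i> * w)" "F' * \<i>" v UNIV] by simp
  show "deriv (\<lambda>y. Re (Fq q (of_real u + \<i> * of_real y))) v = - Im F'"
    using DERIV_imp_deriv[OF has_field_derivative_Re[OF hy]] by simp
  show "deriv (\<lambda>y. Im (Fq q (of_real u + \<i> * of_real y))) v = Re F'"
    using DERIV_imp_deriv[OF has_field_derivative_Im[OF hy]] by simp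
qed

lemma diffs:
  assumes F': "(Fq q has_field_derivative F') (at (of_real u + \<i> * of_real v))"
  shows "(\<lambda>p. Re (Fq q (of_real (fst p) + \<i> * of_real (snd p)))) differentiable (at (u, v))"
    "(\<lambda>p. Im (Fq q (of_real (fst p) + \<i> * of_real (snd p)))) differentiable (at (u, v))"
proof -
  have l: "((\<lambda>p::real\<times>real. of_real (fst p) + \<i> * of_real (snd p)) has_derivative
     (\<lambda>h. of_real (fst h) + \<i> * of_real (snd h))) (at (u, v))"
    by (auto intro!: derivative_eq_intros bounded_linear.has_derivative[OF bounded_linear_of_real])
  have g: "(Fq q has_derivative (*) F') (at (of_real (fst (u,v)) + \<i> * of_real (snd (u,v))))"
    using F' by (simp add: has_field_derivative_def)
  have c: "((\<lambda>p. Fq q (of_real (fst p) + \<i> * of_real (snd p))) has_derivative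
     (\<lambda>h. F' * (of_real (fst h) + \<i> * of_real (snd h)))) (at (u, v))"
    using has_derivative_compose[OF l g] by simp
  show "(\<lambda>p. Re (Fq q (of_real (fst p) + \<i> * of_real (snd p)))) differentiable (at (u, v))"
    by (rule differentiableI) (rule bounded_linear.has_derivative[OF bounded_linear_Re c])
  show "(\<lambda>p. Im (Fq q (of_real (fst p) + \<i> * of_real (snd p)))) differentiable (at (u, v))"
    by (rule differentiableI) (rule bounded_linear.has_derivative[OF bounded_linear_Im c])
qed

lemma Fq_deriv:
  assumes "Dz q u v \<noteq> 0"
  shows "\<exists>F'. (Fq q has_field_derivative F') (at (of_real u + \<i> * of_real v))"
  unfolding Fq_def by (rule exI, (rule derivative_intros)+, use w_nz[OF assms] in simp)


theorem proposition4p10: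
  fixes q :: quat
  shows "intrinsic_slice_hyperholomorphic (UNIV - qclass q)
           (\<lambda>s. fueterD (\<lambda>p. SLinv s p) q)"
proof -
  define \<alpha> where "\<alpha> = (\<lambda>p::real\<times>real. Re (Fq q (of_real (fst p) + \<i> * of_real (snd p))))"
  define \<beta> where "\<beta> = (\<lambda>p::real\<times>real. Im (Fq q (of_real (fst p) + \<i> * of_real (snd p))))"
  have U: "UNIV - qclass q = {s. DQ s (q$1) ((norm q)^2) \<noteq> 0}" using class_iff by auto
  have op: "open (UNIV - qclass q)" unfolding U
    by (rule open_Collect_neq) (simp_all add: DQ_def AQ_def BQ_def sg_def continuous_intros)
  have ax: "axially_symmetric (UNIV - qclass q)"
    unfolding axially_symmetric_def U by (auto simp: pt(3))
  have rep: "\<forall>J\<in>qsphere. \<forall>u v. qreal u + v *\<^sub>R J \<in> UNIV - qclass q \<longrightarrow>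
      fueterD (\<lambda>p. SLinv (qreal u + v *\<^sub>R J) p) q = qreal (\<alpha> (u, v)) + \<beta> (u, v) *\<^sub>R J"
  proof (intro ballI allI impI)
    fix J u v assume J: "J \<in> qsphere" and "qreal u + v *\<^sub>R J \<in> UNIV - qclass q"
    then have D: "DQ (qreal u + v *\<^sub>R J) (q$1) ((norm q)^2) \<noteq> 0" using U by auto
    have J1: "J$1 = 0" using sphere_sg[OF J] by simp
    show "fueterD (\<lambda>p. SLinv (qreal u + v *\<^sub>R J) p) q = qreal (\<alpha> (u, v)) + \<beta> (u, v) *\<^sub>R J"
      unfolding fD[OF D] pt[OF J] \<alpha>_def \<beta>_def fst_conv snd_conv Re_F Im_F
      using J1 D pt(3)[OF J] by (simp add: vec_eq_iff forall_4 qone_def qreal_def) (simp add: field_simps)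
  qed
  have props: "\<forall>u v. (\<exists>J \<in> qsphere. qreal u + v *\<^sub>R J \<in> UNIV - qclass q) \<longrightarrow>
            \<alpha> differentiable (at (u, v)) \<and> \<beta> differentiable (at (u, v)) \<and>
            \<alpha> (u, - v) = \<alpha> (u, v) \<and> \<beta> (u, - v) = - \<beta> (u, v) \<and>
            deriv (\<lambda>x. \<alpha> (x, v)) u = deriv (\<lambda>y. \<beta> (u, y)) v \<and>
            deriv (\<lambda>y. \<alpha> (u, y)) v = - deriv (\<lambda>x. \<beta> (x, v)) u"
  proof (intro allI impI)
    fix u v assume "\<exists>J \<in> qsphere. qreal u + v *\<^sub>R J \<in> UNIV - qclass q"
    then obtain J where J: "J \<in> qsphere" and "qreal u + v *\<^sub>R J \<in> UNIV - qclass q" by blast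
    then have "DQ (qreal u + v *\<^sub>R J) (q$1) ((norm q)^2) \<noteq> 0" using U by auto
    then have Dz: "Dz q u v \<noteq> 0" using pt(3)[OF J] by simp
    obtain F' where F': "(Fq q has_field_derivative F') (at (of_real u + \<i> * of_real v))"
      using Fq_deriv[OF Dz] by blast
    have sym1: "\<alpha> (u, - v) = \<alpha> (u, v)" unfolding \<alpha>_def fst_conv snd_conv Re_F
      by (simp add: Az_def Dz_def)
    have sym2: "\<beta> (u, - v) = - \<beta> (u, v)" unfolding \<beta>_def fst_conv snd_conv Im_F
      by (simp add: Az_def Dz_def)
    show "\<alpha> differentiable (at (u, v)) \<and> \<beta> differentiable (at (u, v)) \<and>
            \<alpha> (u, - v) = \<alpha> (u, v) \<and> \<beta> (u, - v) = - \<beta> (u, v) \<and>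
            deriv (\<lambda>x. \<alpha> (x, v)) u = deriv (\<lambda>y. \<beta> (u, y)) v \<and>
            deriv (\<lambda>y. \<alpha> (u, y)) v = - deriv (\<lambda>x. \<beta> (x, v)) u"
      using diffs[OF F'] partials[OF F'] sym1 sym2 unfolding \<alpha>_def \<beta>_def by simp
  qed
  show ?thesis unfolding intrinsic_slice_hyperholomorphic_def
    using op ax rep props by blast
qed

end
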